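(* Let $V$ be a commutative valuation domain with quotient field $F$, $K/F$ a finite Galois extension with group $G$, $S$ the integral closure of $V$ in $K$, and $f:G\times G\to S\setminus\{0\}$ a normalized $2$-cocycle such that $f(\sigma,\tau)\notin M^2$ for every $\sigma,\tau\in G$ and every maximal ideal $M$ of $S$. Then for each maximal ideal $M$ of $S$, the graph $\mathrm{Gr}(f^M)$ is a chain.
   Context: $V$ has arbitrary Krull dimension. A normalized 2-cocycle satisfies $\sigma(f(\tau,\gamma))f(\sigma,\tau\gamma)=f(\sigma,\tau)f(\sigma\tau,\gamma)$, $f(1,\sigma)=f(\sigma,1)=1$. $H=\{\sigma\in G:f(\sigma,\sigma^{-1})\in U(S)\}$, a subgroup. For a maximal ideal $M$ of $S$, $\sigma H\le_M\tau H$ iff $f(\sigma,\sigma^{-1}\tau)\notin M$ is a well-defined preorder on the left coset space $G/H$; $\mathrm{Gr}(f^M)$ is the induced partial order on its equivalence classes (where $\sigma H\sim\tau H$ iff $\sigma H\le_M\tau H$ and $\tau H\le_M\sigma H$). A chain is a totally ordered set. *)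

theory Defs
  imports Main "HOL-Computational_Algebra.Polynomial"
begin

text \<open>The field K is modelled as the whole type 'k (a field). Subsets of 'k model
  the subrings V, S and the subfield F.\<close>

definition subring :: "'k::field set \<Rightarrow> bool" where
  "subring R \<longleftrightarrow> 0 \<in> R \<and> 1 \<in> R \<and> (\<forall>x\<in>R. \<forall>y\<in>R. x + y \<in> R \<and> x - y \<in> R \<and> x * y \<in> R)"

definition quotient_field :: "'k::field set \<Rightarrow> 'k set" where
  "quotient_field V = {a / b | a b. a \<in> V \<and> b \<in> V \<and> b \<noteq> 0}"

text \<open>Valuation domain (commutative; a subring of a field is a domain): for every nonzero
  x of the quotient field, x or x^{-1} lies in V.\<close>
definition valuation_domain :: "'k::field set \<Rightarrow> bool" where
  "valuation_domain V \<longleftrightarrow> subring V \<and>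
     (\<forall>x\<in>quotient_field V. x \<noteq> 0 \<longrightarrow> x \<in> V \<or> inverse x \<in> V)"

definition field_aut :: "('k::field \<Rightarrow> 'k) \<Rightarrow> bool" where
  "field_aut \<sigma> \<longleftrightarrow> bij \<sigma> \<and> \<sigma> 1 = 1 \<and>
     (\<forall>x y. \<sigma> (x + y) = \<sigma> x + \<sigma> y \<and> \<sigma> (x * y) = \<sigma> x * \<sigma> y)"

definition Gal :: "'k::field set \<Rightarrow> ('k \<Rightarrow> 'k) set" where
  "Gal F = {\<sigma>. field_aut \<sigma> \<and> (\<forall>x\<in>F. \<sigma> x = x)}"

definition finite_dim_over :: "'k::field set \<Rightarrow> bool" where
  "finite_dim_over F \<longleftrightarrow> (\<exists>B. finite B \<and>
     (\<forall>x. \<exists>c. (\<forall>b\<in>B. c b \<in> F) \<and> x = (\<Sum>b\<in>B. c b * b)))"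

definition finite_galois :: "'k::field set \<Rightarrow> bool" where
  "finite_galois F \<longleftrightarrow> finite_dim_over F \<and> {x. \<forall>\<sigma>\<in>Gal F. \<sigma> x = x} = F"

definition integral_closure :: "'k::field set \<Rightarrow> 'k set" where
  "integral_closure V = {x. \<exists>p. lead_coeff p = 1 \<and> (\<forall>i. coeff p i \<in> V) \<and> poly p x = 0}"

definition ideal_of :: "'k::field set \<Rightarrow> 'k set \<Rightarrow> bool" where
  "ideal_of S I \<longleftrightarrow> I \<subseteq> S \<and> 0 \<in> I \<and> (\<forall>x\<in>I. \<forall>y\<in>I. x + y \<in> I \<and> x - y \<in> I) \<and>
     (\<forall>s\<in>S. \<forall>x\<in>I. s * x \<in> I)"

definition maximal_ideal_of :: "'k::field set \<Rightarrow> 'k set \<Rightarrow> bool" where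
  "maximal_ideal_of S M \<longleftrightarrow> ideal_of S M \<and> M \<noteq> S \<and>
     (\<forall>J. ideal_of S J \<and> M \<subseteq> J \<longrightarrow> J = M \<or> J = S)"

definition ideal_square :: "'k::field set \<Rightarrow> 'k set" where
  "ideal_square M = {(\<Sum>i<n. a i * b i) | (n::nat) a b. \<forall>i<n. a i \<in> M \<and> b i \<in> M}"

definition units_of_ring :: "'k::field set \<Rightarrow> 'k set" where
  "units_of_ring S = {x \<in> S. x \<noteq> 0 \<and> inverse x \<in> S}"

definition normalized_cocycle :: "('k::field \<Rightarrow> 'k) set \<Rightarrow> 'k set \<Rightarrow>
    (('k \<Rightarrow> 'k) \<Rightarrow> ('k \<Rightarrow> 'k) \<Rightarrow> 'k) \<Rightarrow> bool" where
  "normalized_cocycle G S f \<longleftrightarrow>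
     (\<forall>\<sigma>\<in>G. \<forall>\<tau>\<in>G. f \<sigma> \<tau> \<in> S - {0}) \<and>
     (\<forall>\<sigma>\<in>G. \<forall>\<tau>\<in>G. \<forall>\<gamma>\<in>G. \<sigma> (f \<tau> \<gamma>) * f \<sigma> (\<tau> \<circ> \<gamma>) = f \<sigma> \<tau> * f (\<sigma> \<circ> \<tau>) \<gamma>) \<and>
     (\<forall>\<sigma>\<in>G. f id \<sigma> = 1 \<and> f \<sigma> id = 1)"

definition H_of :: "('k::field \<Rightarrow> 'k) set \<Rightarrow> 'k set \<Rightarrow> (('k \<Rightarrow> 'k) \<Rightarrow> ('k \<Rightarrow> 'k) \<Rightarrow> 'k)
    \<Rightarrow> ('k \<Rightarrow> 'k) set" where
  "H_of G S f = {\<sigma> \<in> G. f \<sigma> (inv \<sigma>) \<in> units_of_ring S}"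

definition lcoset :: "('k \<Rightarrow> 'k) \<Rightarrow> ('k \<Rightarrow> 'k) set \<Rightarrow> ('k \<Rightarrow> 'k) set" where
  "lcoset \<sigma> H = (\<lambda>h. \<sigma> \<circ> h) ` H"

definition left_cosets :: "('k \<Rightarrow> 'k) set \<Rightarrow> ('k \<Rightarrow> 'k) set \<Rightarrow> ('k \<Rightarrow> 'k) set set" where
  "left_cosets G H = {lcoset \<sigma> H | \<sigma>. \<sigma> \<in> G}"

text \<open>The preorder \<le>_M on G/H: sigma H \<le>_M tau H iff f(sigma, sigma^{-1} tau) \<notin> M
  (well defined on cosets, so quantifying over representatives existentially is harmless).\<close>
definition coset_le :: "('k::field \<Rightarrow> 'k) set \<Rightarrow> 'k set \<Rightarrow> (('k \<Rightarrow> 'k) \<Rightarrow> ('k \<Rightarrow> 'k) \<Rightarrow> 'k)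
    \<Rightarrow> 'k set \<Rightarrow> ('k \<Rightarrow> 'k) set \<Rightarrow> ('k \<Rightarrow> 'k) set \<Rightarrow> bool" where
  "coset_le G S f M A B \<longleftrightarrow> (\<exists>\<sigma>\<in>G. \<exists>\<tau>\<in>G. A = lcoset \<sigma> (H_of G S f) \<and>
      B = lcoset \<tau> (H_of G S f) \<and> f \<sigma> (inv \<sigma> \<circ> \<tau>) \<notin> M)"

definition coset_equiv where
  "coset_equiv G S f M A B \<longleftrightarrow> coset_le G S f M A B \<and> coset_le G S f M B A"

definition Gr_classes where
  "Gr_classes G S f M = {{B \<in> left_cosets G (H_of G S f). coset_equiv G S f M A B} | A.
      A \<in> left_cosets G (H_of G S f)}"

definition Gr_le where
  "Gr_le G S f M X Y \<longleftrightarrow> (\<exists>A\<in>X. \<exists>B\<in>Y. coset_le G S f M A B)"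

definition Gr_is_chain where
  "Gr_is_chain G S f M \<longleftrightarrow>
     (\<forall>X\<in>Gr_classes G S f M. \<forall>Y\<in>Gr_classes G S f M. Gr_le G S f M X Y \<or> Gr_le G S f M Y X)"

end

theory Submission
  imports Defs
begin

lemma aut_zero: "field_aut \<sigma> \<Longrightarrow> \<sigma> 0 = 0"
  unfolding field_aut_def by (metis add_cancel_right_right add_0)

lemma aut_add: "field_aut \<sigma> \<Longrightarrow> \<sigma> (x + y) = \<sigma> x + \<sigma> y"
  unfolding field_aut_def by blast

lemma aut_mult: "field_aut \<sigma> \<Longrightarrow> \<sigma> (x * y) = \<sigma> x * \<sigma> y"
  unfolding field_aut_def by blast

lemma aut_diff: "field_aut \<sigma> \<Longrightarrow> \<sigma> (x - y) = \<sigma> x - \<sigma> y"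
  using aut_add[of \<sigma> "x - y" y] by (simp add: eq_diff_eq)

lemma aut_bij: "field_aut \<sigma> \<Longrightarrow> bij \<sigma>"
  unfolding field_aut_def by blast

lemma aut_inv_r: "field_aut \<sigma> \<Longrightarrow> \<sigma> (inv \<sigma> x) = x"
  using aut_bij bij_inv_eq_iff by metis

lemma aut_inv_l: "field_aut \<sigma> \<Longrightarrow> inv \<sigma> (\<sigma> x) = x"
  using aut_bij bij_is_inj inv_f_f by metis

lemma aut_inv: assumes a: "field_aut \<sigma>" shows "field_aut (inv \<sigma>)"
proof -
  have inj: "inj \<sigma>" using aut_bij[OF a] bij_is_inj by blast
  have "bij (inv \<sigma>)" using aut_bij[OF a] bij_imp_bij_inv by blast
  moreover have "inv \<sigma> 1 = 1" using a unfolding field_aut_def by (metis inv_f_f inj)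
  moreover have "\<forall>x y. inv \<sigma> (x + y) = inv \<sigma> x + inv \<sigma> y \<and> inv \<sigma> (x * y) = inv \<sigma> x * inv \<sigma> y"
  proof (intro allI conjI)
    fix x y
    show "inv \<sigma> (x + y) = inv \<sigma> x + inv \<sigma> y"
      using aut_add[OF a, of "inv \<sigma> x" "inv \<sigma> y"] aut_inv_r[OF a] aut_inv_l[OF a] by metis
    show "inv \<sigma> (x * y) = inv \<sigma> x * inv \<sigma> y"
      using aut_mult[OF a, of "inv \<sigma> x" "inv \<sigma> y"] aut_inv_r[OF a] aut_inv_l[OF a] by metis
  qed
  ultimately show ?thesis unfolding field_aut_def by blast
qed

lemma Gal_inv: assumes "\<sigma> \<in> Gal F" shows "inv \<sigma> \<in> Gal F"
proof -
  have a: "field_aut \<sigma>" and fx: "\<forall>x\<in>F. \<sigma> x = x" using assms unfolding Gal_def by auto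
  have "\<forall>x\<in>F. inv \<sigma> x = x" using fx aut_inv_l[OF a] by metis
  then show ?thesis using aut_inv[OF a] unfolding Gal_def by blast
qed

lemma Gal_comp: assumes "\<sigma> \<in> Gal F" "\<tau> \<in> Gal F" shows "\<sigma> \<circ> \<tau> \<in> Gal F"
proof -
  have a: "field_aut \<sigma>" "field_aut \<tau>" "\<forall>x\<in>F. \<sigma> x = x" "\<forall>x\<in>F. \<tau> x = x"
    using assms unfolding Gal_def by auto
  have "bij (\<sigma> \<circ> \<tau>)" using a(1,2) aut_bij bij_comp by blast
  moreover have "(\<sigma> \<circ> \<tau>) 1 = 1" using a(1,2) unfolding field_aut_def by simp
  moreover have "\<forall>x y. (\<sigma> \<circ> \<tau>) (x + y) = (\<sigma> \<circ> \<tau>) x + (\<sigma> \<circ> \<tau>) y \<and>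
      (\<sigma> \<circ> \<tau>) (x * y) = (\<sigma> \<circ> \<tau>) x * (\<sigma> \<circ> \<tau>) y"
    using aut_add[OF a(1)] aut_add[OF a(2)] aut_mult[OF a(1)] aut_mult[OF a(2)] by simp
  moreover have "\<forall>x\<in>F. (\<sigma> \<circ> \<tau>) x = x" using a(3,4) by simp
  ultimately show ?thesis unfolding Gal_def field_aut_def by blast
qed

lemma aut_poly:
  assumes a: "field_aut \<sigma>" shows "(\<forall>i. \<sigma> (coeff p i) = coeff p i) \<Longrightarrow> \<sigma> (poly p x) = poly p (\<sigma> x)"
proof (induction p rule: pCons_induct)
  case 0 then show ?case using aut_zero[OF a] by simp
next
  case (pCons c p)
  have h1: "\<sigma> c = c" using pCons.prems[rule_format, of 0] by simp
  have "\<forall>i. \<sigma> (coeff p i) = coeff p i"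
    using pCons.prems by (metis coeff_pCons_Suc)
  then have "\<sigma> (poly p x) = poly p (\<sigma> x)" using pCons.IH by blast
  then show ?case using h1 aut_add[OF a] aut_mult[OF a] by simp
qed

lemma V_sub_F: "subring V \<Longrightarrow> V \<subseteq> quotient_field V"
  unfolding subring_def quotient_field_def by force

lemma Gal_S:
  assumes "subring V" "\<sigma> \<in> Gal (quotient_field V)" "x \<in> integral_closure V"
  shows "\<sigma> x \<in> integral_closure V"
proof -
  obtain p where p: "lead_coeff p = 1" "\<forall>i. coeff p i \<in> V" "poly p x = 0"
    using assms(3) unfolding integral_closure_def by blast
  have a: "field_aut \<sigma>" and fx: "\<forall>y\<in>quotient_field V. \<sigma> y = y" using assms(2) unfolding Gal_def by auto
  have "\<forall>i. \<sigma> (coeff p i) = coeff p i" using p(2) fx V_sub_F[OF assms(1)] by blast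
  then have "poly p (\<sigma> x) = 0" using aut_poly[OF a] p(3) aut_zero[OF a] by metis
  then show ?thesis using p unfolding integral_closure_def by blast
qed

lemma one_S: assumes "subring V" shows "1 \<in> integral_closure V"
proof -
  have "\<forall>i. coeff [:-1, 1:] i \<in> V"
    using assms unfolding subring_def by (auto simp: coeff_pCons split: nat.splits)
  moreover have "lead_coeff [:-1, 1::'a:] = 1" by simp
  moreover have "poly [:-1, 1:] 1 = (0::'a)" by simp
  ultimately show ?thesis unfolding integral_closure_def by blast
qed

lemma max_sub: "maximal_ideal_of S M \<Longrightarrow> M \<subseteq> S"
  by (simp add: maximal_ideal_of_def ideal_of_def)

lemma one_notin_max:
  assumes "maximal_ideal_of S M" "1 \<in> S" shows "1 \<notin> M"
proof
  assume "1 \<in> M"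
  have I: "M \<subseteq> S" "\<forall>s\<in>S. \<forall>x\<in>M. s * x \<in> M" "M \<noteq> S"
    using assms(1) unfolding maximal_ideal_of_def ideal_of_def by auto
  have "S \<subseteq> M"
  proof
    fix s assume "s \<in> S"
    then have "s * 1 \<in> M" using I(2) \<open>1 \<in> M\<close> by blast
    then show "s \<in> M" by simp
  qed
  then show False using I by blast
qed

lemma transport_max:
  assumes sub: "subring V" and sG: "\<sigma> \<in> Gal (quotient_field V)"
    and M: "maximal_ideal_of (integral_closure V) M"
  shows "maximal_ideal_of (integral_closure V) {x \<in> integral_closure V. \<sigma> x \<in> M}"
proof -
  let ?S = "integral_closure V"
  let ?M = "{x \<in> ?S. \<sigma> x \<in> M}"
  have a: "field_aut \<sigma>" using sG unfolding Gal_def by auto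
  have iG: "inv \<sigma> \<in> Gal (quotient_field V)" using Gal_inv[OF sG] .
  have SS: "\<And>x. x \<in> ?S \<Longrightarrow> \<sigma> x \<in> ?S" using Gal_S[OF sub sG] .
  have SSi: "\<And>x. x \<in> ?S \<Longrightarrow> inv \<sigma> x \<in> ?S" using Gal_S[OF sub iG] .
  have MI: "ideal_of ?S M" and MS: "M \<noteq> ?S"
    and Mmax: "\<And>J. ideal_of ?S J \<Longrightarrow> M \<subseteq> J \<Longrightarrow> J = M \<or> J = ?S"
    using M unfolding maximal_ideal_of_def by auto
  have one: "1 \<in> ?S" using one_S[OF sub] .
  have 1: "1 \<notin> M" using one_notin_max[OF M one] .
  have id: "ideal_of ?S ?M"
    unfolding ideal_of_def
  proof (intro conjI ballI)
    show "?M \<subseteq> ?S" by blast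
    have "0 \<in> M" "M \<subseteq> ?S" using MI unfolding ideal_of_def by auto
    then show "0 \<in> ?M" using aut_zero[OF a] by auto
  next
    fix x y assume "x \<in> ?M" "y \<in> ?M"
    then have m: "\<sigma> x \<in> M" "\<sigma> y \<in> M" by auto
    have MS': "M \<subseteq> ?S" using MI unfolding ideal_of_def by blast
    have "\<sigma> (x + y) \<in> M" "\<sigma> (x - y) \<in> M"
      using m MI aut_add[OF a] aut_diff[OF a] unfolding ideal_of_def by simp_all
    moreover have "\<And>z. \<sigma> z \<in> M \<Longrightarrow> z \<in> ?S"
      using MS' SSi aut_inv_l[OF a] by (metis subsetD)
    ultimately show "x + y \<in> ?M" "x - y \<in> ?M" by auto
  next
    fix s x assume "s \<in> ?S" "x \<in> ?M"
    then have "\<sigma> (s * x) \<in> M" using MI aut_mult[OF a] SS unfolding ideal_of_def by auto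
    moreover have "M \<subseteq> ?S" using MI unfolding ideal_of_def by blast
    ultimately have "s * x \<in> ?S" using SSi aut_inv_l[OF a] by (metis subsetD)
    then show "s * x \<in> ?M" using \<open>\<sigma> (s * x) \<in> M\<close> by blast
  qed
  have ne: "?M \<noteq> ?S"
  proof
    assume "?M = ?S"
    then have "1 \<in> ?M" using one by blast
    then show False using 1 a unfolding field_aut_def by auto
  qed
  have mx: "J = ?M \<or> J = ?S" if J: "ideal_of ?S J" "?M \<subseteq> J" for J
  proof -
    have JS: "J \<subseteq> ?S" using J unfolding ideal_of_def by blast
    have "ideal_of ?S (\<sigma> ` J)"
      unfolding ideal_of_def
    proof (intro conjI ballI)
      show "\<sigma> ` J \<subseteq> ?S" using JS SS by blast
      have "0 \<in> J" using J(1) unfolding ideal_of_def by blast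
      then show "0 \<in> \<sigma> ` J" using aut_zero[OF a] by (metis image_eqI)
    next
      fix x y assume "x \<in> \<sigma> ` J" "y \<in> \<sigma> ` J"
      then obtain u v where uv: "u \<in> J" "v \<in> J" "x = \<sigma> u" "y = \<sigma> v" by blast
      have cl: "u + v \<in> J" "u - v \<in> J" using J(1) uv(1,2) unfolding ideal_of_def by auto
      have "x + y = \<sigma> (u + v)" "x - y = \<sigma> (u - v)" using uv aut_add[OF a] aut_diff[OF a] by auto
      then show "x + y \<in> \<sigma> ` J" "x - y \<in> \<sigma> ` J" using cl by auto
    next
      fix s x assume "s \<in> ?S" "x \<in> \<sigma> ` J"
      then obtain u where u: "u \<in> J" "x = \<sigma> u" by blast
      have "s * x = \<sigma> (inv \<sigma> s * u)" using u aut_mult[OF a] aut_inv_r[OF a] by simp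
      moreover have "inv \<sigma> s * u \<in> J" using J \<open>s \<in> ?S\<close> SSi u unfolding ideal_of_def by blast
      ultimately show "s * x \<in> \<sigma> ` J" by blast
    qed
    moreover have "M \<subseteq> \<sigma> ` J"
    proof
      fix m assume m: "m \<in> M"
      have "m \<in> ?S" using m MI unfolding ideal_of_def by blast
      then have "inv \<sigma> m \<in> ?M" using m SSi aut_inv_r[OF a] by simp
      then show "m \<in> \<sigma> ` J" using J(2) aut_inv_r[OF a] by (metis image_eqI subsetD)
    qed
    ultimately have "\<sigma> ` J = M \<or> \<sigma> ` J = ?S" using Mmax by blast
    then show ?thesis
    proof
      assume "\<sigma> ` J = M"
      then have "J \<subseteq> ?M" using JS by blast
      then show ?thesis using J(2) by blast
    next
      assume e: "\<sigma> ` J = ?S"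
      have "?S \<subseteq> J"
      proof
        fix s assume "s \<in> ?S"
        then have "\<sigma> s \<in> \<sigma> ` J" using e SS by blast
        then obtain j where "j \<in> J" "\<sigma> s = \<sigma> j" by blast
        then show "s \<in> J" using aut_inv_l[OF a] by metis
      qed
      then show ?thesis using JS by blast
    qed
  qed
  show ?thesis unfolding maximal_ideal_of_def using id ne mx by blast
qed

lemma coc_eq: "normalized_cocycle G S f \<Longrightarrow> a \<in> G \<Longrightarrow> b \<in> G \<Longrightarrow> c \<in> G \<Longrightarrow>
   a (f b c) * f a (b \<circ> c) = f a b * f (a \<circ> b) c"
  unfolding normalized_cocycle_def by blast

lemma coc_id: "normalized_cocycle G S f \<Longrightarrow> a \<in> G \<Longrightarrow> f a id = 1"
  unfolding normalized_cocycle_def by blast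

lemma key:
  assumes sub: "subring V" and sG: "\<sigma> \<in> Gal (quotient_field V)" and tG: "\<tau> \<in> Gal (quotient_field V)"
    and coc: "normalized_cocycle (Gal (quotient_field V)) (integral_closure V) f"
    and hyp: "\<forall>a\<in>Gal (quotient_field V). \<forall>b\<in>Gal (quotient_field V).
       f a b \<notin> ideal_square {x \<in> integral_closure V. \<sigma> x \<in> M}"
    and M: "maximal_ideal_of (integral_closure V) M"
  shows "f \<sigma> (inv \<sigma> \<circ> \<tau>) \<notin> M \<or> f \<tau> (inv \<tau> \<circ> \<sigma>) \<notin> M"
proof (rule ccontr)
  let ?G = "Gal (quotient_field V)"
  let ?S = "integral_closure V"
  assume "\<not> ?thesis"
  then have m1: "f \<sigma> (inv \<sigma> \<circ> \<tau>) \<in> M" and m2: "f \<tau> (inv \<tau> \<circ> \<sigma>) \<in> M" by auto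
  define \<rho> where "\<rho> = inv \<sigma> \<circ> \<tau>"
  define \<rho>' where "\<rho>' = inv \<tau> \<circ> \<sigma>"
  have a: "field_aut \<sigma>" and at: "field_aut \<tau>" using sG tG unfolding Gal_def by auto
  have rG: "\<rho> \<in> ?G" "\<rho>' \<in> ?G" unfolding \<rho>_def \<rho>'_def using Gal_comp[OF Gal_inv[OF sG] tG] Gal_comp[OF Gal_inv[OF tG] sG] by auto
  have c1: "\<rho> \<circ> \<rho>' = id" unfolding \<rho>_def \<rho>'_def using aut_inv_r[OF at] aut_inv_l[OF a] by (auto simp: fun_eq_iff)
  have c2: "\<sigma> \<circ> \<rho> = \<tau>" unfolding \<rho>_def using aut_inv_r[OF a] by (auto simp: fun_eq_iff)
  have cc: "\<sigma> (f \<rho> \<rho>') * f \<sigma> (\<rho> \<circ> \<rho>') = f \<sigma> \<rho> * f (\<sigma> \<circ> \<rho>) \<rho>'"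
    using coc_eq[OF coc sG rG] .
  have fid: "f \<sigma> id = 1" using coc_id[OF coc sG] .
  have "\<sigma> (f \<rho> \<rho>') * f \<sigma> id = f \<sigma> \<rho> * f \<tau> \<rho>'" using cc by (simp only: c1 c2)
  then have eq: "\<sigma> (f \<rho> \<rho>') = f \<sigma> \<rho> * f \<tau> \<rho>'" by (simp only: fid mult_1_right)
  let ?M = "{x \<in> ?S. \<sigma> x \<in> M}"
  have MS: "M \<subseteq> ?S" using max_sub[OF M] .
  have SSi: "\<And>x. x \<in> ?S \<Longrightarrow> inv \<sigma> x \<in> ?S" using Gal_S[OF sub Gal_inv[OF sG]] .
  define u where "u = inv \<sigma> (f \<sigma> \<rho>)"
  define v where "v = inv \<sigma> (f \<tau> \<rho>')"
  have m1': "f \<sigma> \<rho> \<in> M" using m1 unfolding \<rho>_def .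
  have m2': "f \<tau> \<rho>' \<in> M" using m2 unfolding \<rho>'_def .
  have "u \<in> ?S" unfolding u_def using SSi MS m1' by blast
  moreover have "\<sigma> u \<in> M" unfolding u_def using m1' aut_inv_r[OF a] by simp
  ultimately have uM: "u \<in> ?M" by blast
  have "v \<in> ?S" unfolding v_def using SSi MS m2' by blast
  moreover have "\<sigma> v \<in> M" unfolding v_def using m2' aut_inv_r[OF a] by simp
  ultimately have vM: "v \<in> ?M" by blast
  have "\<sigma> (u * v) = \<sigma> (f \<rho> \<rho>')" using eq aut_mult[OF a] aut_inv_r[OF a] unfolding u_def v_def by simp
  then have "inv \<sigma> (\<sigma> (u * v)) = inv \<sigma> (\<sigma> (f \<rho> \<rho>'))" by simp
  then have y: "f \<rho> \<rho>' = u * v" unfolding aut_inv_l[OF a] by simp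
  have "\<exists>(n::nat) a b. f \<rho> \<rho>' = (\<Sum>i<n. a i * b i) \<and> (\<forall>i<n. a i \<in> ?M \<and> b i \<in> ?M)"
    apply (rule exI[of _ "1::nat"])
    apply (rule exI[of _ "\<lambda>_. u"])
    apply (rule exI[of _ "\<lambda>_. v"])
    using uM vM y by simp
  then have "f \<rho> \<rho>' \<in> ideal_square ?M" unfolding ideal_square_def by (simp only: mem_Collect_eq)
  moreover have "f \<rho> \<rho>' \<notin> ideal_square ?M" using hyp rG by blast
  ultimately show False by blast
qed
theorem proposition2p10:
  fixes V :: "'k::field set"
    and f :: "('k \<Rightarrow> 'k) \<Rightarrow> ('k \<Rightarrow> 'k) \<Rightarrow> 'k"
  assumes "valuation_domain V"
    and "finite_galois (quotient_field V)"
    and "normalized_cocycle (Gal (quotient_field V)) (integral_closure V) f"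
    and "\<forall>M. maximal_ideal_of (integral_closure V) M \<longrightarrow>
           (\<forall>\<sigma>\<in>Gal (quotient_field V). \<forall>\<tau>\<in>Gal (quotient_field V). f \<sigma> \<tau> \<notin> ideal_square M)"
  shows "\<forall>M. maximal_ideal_of (integral_closure V) M \<longrightarrow>
           Gr_is_chain (Gal (quotient_field V)) (integral_closure V) f M"
proof (intro allI impI)
  fix M assume M: "maximal_ideal_of (integral_closure V) M"
  let ?G = "Gal (quotient_field V)"
  let ?S = "integral_closure V"
  let ?H = "H_of ?G ?S f"
  have sub: "subring V" using assms(1) unfolding valuation_domain_def by blast
  have one: "1 \<notin> M" using one_notin_max[OF M one_S[OF sub]] .
  have crefl: "coset_equiv ?G ?S f M (lcoset \<sigma> ?H) (lcoset \<sigma> ?H)" if sG: "\<sigma> \<in> ?G" for \<sigma>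
  proof -
    have a: "field_aut \<sigma>" using sG unfolding Gal_def by auto
    have "inv \<sigma> \<circ> \<sigma> = id" using aut_inv_l[OF a] by (auto simp: fun_eq_iff)
    moreover have "f \<sigma> id = 1" using coc_id[OF assms(3) sG] .
    ultimately have "f \<sigma> (inv \<sigma> \<circ> \<sigma>) \<notin> M" using one by simp
    then have "coset_le ?G ?S f M (lcoset \<sigma> ?H) (lcoset \<sigma> ?H)"
        unfolding coset_le_def
        apply (rule_tac x="\<sigma>" in bexI)
         apply (rule_tac x="\<sigma>" in bexI)
          apply (intro conjI refl)
        using sG by auto
    then show ?thesis unfolding coset_equiv_def by simp
  qed
  show "Gr_is_chain ?G ?S f M"
    unfolding Gr_is_chain_def
  proof (intro ballI)
    fix X Y assume X: "X \<in> Gr_classes ?G ?S f M" and Y: "Y \<in> Gr_classes ?G ?S f M"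
    obtain AX where AX: "AX \<in> left_cosets ?G ?H" and Xd0: "X = {B \<in> left_cosets ?G ?H. coset_equiv ?G ?S f M AX B}"
      using X unfolding Gr_classes_def by blast
    obtain \<sigma> where sG: "\<sigma> \<in> ?G" and AXe: "AX = lcoset \<sigma> ?H"
      using AX unfolding left_cosets_def by blast
    have Xd: "X = {B \<in> left_cosets ?G ?H. coset_equiv ?G ?S f M (lcoset \<sigma> ?H) B}"
      using Xd0 AXe by simp
    obtain AY where AY: "AY \<in> left_cosets ?G ?H" and Yd0: "Y = {B \<in> left_cosets ?G ?H. coset_equiv ?G ?S f M AY B}"
      using Y unfolding Gr_classes_def by blast
    obtain \<tau> where tG: "\<tau> \<in> ?G" and AYe: "AY = lcoset \<tau> ?H"
      using AY unfolding left_cosets_def by blast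
    have Yd: "Y = {B \<in> left_cosets ?G ?H. coset_equiv ?G ?S f M (lcoset \<tau> ?H) B}"
      using Yd0 AYe by simp
    have AX: "lcoset \<sigma> ?H \<in> X" unfolding Xd using crefl[OF sG] AX AXe by simp
    have BY: "lcoset \<tau> ?H \<in> Y" unfolding Yd using crefl[OF tG] AY AYe by simp
    have "maximal_ideal_of ?S {x \<in> ?S. \<sigma> x \<in> M}" using transport_max[OF sub sG M] .
    then have hyp: "\<forall>a\<in>?G. \<forall>b\<in>?G. f a b \<notin> ideal_square {x \<in> ?S. \<sigma> x \<in> M}"
      using mp[OF spec[OF assms(4), of "{x \<in> ?S. \<sigma> x \<in> M}"]] by blast
    have "f \<sigma> (inv \<sigma> \<circ> \<tau>) \<notin> M \<or> f \<tau> (inv \<tau> \<circ> \<sigma>) \<notin> M"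
      using key[OF sub sG tG assms(3) hyp M] .
    then show "Gr_le ?G ?S f M X Y \<or> Gr_le ?G ?S f M Y X"
    proof
      assume "f \<sigma> (inv \<sigma> \<circ> \<tau>) \<notin> M"
      then have "coset_le ?G ?S f M (lcoset \<sigma> ?H) (lcoset \<tau> ?H)"
        unfolding coset_le_def
        apply (rule_tac x="\<sigma>" in bexI)
         apply (rule_tac x="\<tau>" in bexI)
          apply (intro conjI refl)
        using sG tG by auto
      then have "Gr_le ?G ?S f M X Y" unfolding Gr_le_def using AX BY by blast
      then show ?thesis ..
    next
      assume "f \<tau> (inv \<tau> \<circ> \<sigma>) \<notin> M"
      then have "coset_le ?G ?S f M (lcoset \<tau> ?H) (lcoset \<sigma> ?H)"
        unfolding coset_le_def
        apply (rule_tac x="\<tau>" in bexI)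
         apply (rule_tac x="\<sigma>" in bexI)
          apply (intro conjI refl)
        using sG tG by auto
      then have "Gr_le ?G ?S f M Y X" unfolding Gr_le_def using AX BY by blast
      then show ?thesis ..
    qed
  qed
qed

end
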